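(* Every $E$-linear code $C$ of length $2n$ is two-sided symplectic nice, i.e. $|C|\,|C^{\perp_S}|=|E|^{2n}$.
   Context: $E=\langle \kappa,\tau \mid 2\kappa=2\tau=0,\ \kappa^2=\kappa,\ \tau^2=\tau,\ \kappa\tau=\kappa,\ \tau\kappa=\tau\rangle$ is the non-unital ring $\{0,\kappa,\tau,\zeta\}$ ($|E|=4$), $\zeta=\kappa+\tau$, with $e\kappa=e\tau=e$, $e\zeta=0$ for all $e\in E$. An $E$-linear code of length $2n$ is a left $E$-submodule $C\subseteq E^{2n}$. Symplectic inner product: for $x=(u|v),y=(u'|v')\in E^{2n}$, $\langle x,y\rangle_s=\sum_i u_iv'_i+\sum_i v_iu'_i$. $C^{\perp_S}=\{z\in E^{2n}:\langle z,w\rangle_s=0\text{ and }\langle w,z\rangle_s=0\ \forall w\in C\}$. *)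

theory Defs
  imports Main
begin

text \<open>The non-unital ring E = {0, kappa, tau, zeta}, zeta = kappa + tau, of characteristic 2,
  with e * kappa = e * tau = e and e * zeta = 0.\<close>

datatype E = E0 | Ek | Et | Ez

fun E_add :: "E \<Rightarrow> E \<Rightarrow> E" where
  "E_add E0 y = y"
| "E_add x E0 = x"
| "E_add Ek Ek = E0"
| "E_add Ek Et = Ez"
| "E_add Ek Ez = Et"
| "E_add Et Ek = Ez"
| "E_add Et Et = E0"
| "E_add Et Ez = Ek"
| "E_add Ez Ek = Et"
| "E_add Ez Et = Ek"
| "E_add Ez Ez = E0"

fun E_mul :: "E \<Rightarrow> E \<Rightarrow> E" where
  "E_mul x Ek = x"
| "E_mul x Et = x"
| "E_mul x E0 = E0"
| "E_mul x Ez = E0"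

lemma E_UNIV: "(UNIV :: E set) = {E0, Ek, Et, Ez}"
  using E.exhaust by blast

instance E :: finite
  by standard (simp add: E_UNIV)

instantiation E :: comm_monoid_add
begin
definition zero_E_def: "0 = E0"
definition plus_E_def: "x + y = E_add x y"
instance
proof
  fix a b c :: E
  show "a + b + c = a + (b + c)" unfolding plus_E_def
    by (cases a; cases b; cases c) auto
  show "a + b = b + a" unfolding plus_E_def
    by (cases a; cases b) auto
  show "0 + a = a" unfolding plus_E_def zero_E_def by simp
qed
end

instantiation E :: times
begin
definition times_E_def: "x * y = E_mul x y"
instance ..
end

lemma E_relations:
  "Ek + Ek = 0" "Et + Et = 0" "Ek * Ek = Ek" "Et * Et = Et" "Ek * Et = Ek" "Et * Ek = Et"
  "Ez = Ek + Et" "\<And>e::E. e * Ek = e" "\<And>e::E. e * Et = e" "\<And>e::E. e * Ez = 0"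
  by (auto simp: plus_E_def times_E_def zero_E_def)

text \<open>Vectors of E^{2n}: functions nat \<Rightarrow> E vanishing at indices \<ge> 2n.
  A vector x = (u|v) has u_i = x i and v_i = x (n+i) for i < n.\<close>

definition Evec :: "nat \<Rightarrow> (nat \<Rightarrow> E) set" where
  "Evec n = {x. \<forall>i\<ge>2*n. x i = 0}"

definition smult_E :: "E \<Rightarrow> (nat \<Rightarrow> E) \<Rightarrow> (nat \<Rightarrow> E)" where
  "smult_E e x = (\<lambda>i. e * x i)"

definition vadd_E :: "(nat \<Rightarrow> E) \<Rightarrow> (nat \<Rightarrow> E) \<Rightarrow> (nat \<Rightarrow> E)" where
  "vadd_E x y = (\<lambda>i. x i + y i)"

definition E_linear_code :: "nat \<Rightarrow> (nat \<Rightarrow> E) set \<Rightarrow> bool" where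
  "E_linear_code n C \<longleftrightarrow> C \<subseteq> Evec n \<and> (\<lambda>i. 0) \<in> C
     \<and> (\<forall>x\<in>C. \<forall>y\<in>C. vadd_E x y \<in> C)
     \<and> (\<forall>e. \<forall>x\<in>C. smult_E e x \<in> C)"

definition symp_E :: "nat \<Rightarrow> (nat \<Rightarrow> E) \<Rightarrow> (nat \<Rightarrow> E) \<Rightarrow> E" where
  "symp_E n x y = (\<Sum>i<n. x i * y (n + i)) + (\<Sum>i<n. x (n + i) * y i)"

definition symp_dual :: "nat \<Rightarrow> (nat \<Rightarrow> E) set \<Rightarrow> (nat \<Rightarrow> E) set" where
  "symp_dual n C = {z \<in> Evec n. \<forall>w\<in>C. symp_E n z w = 0 \<and> symp_E n w z = 0}"

end

theory Submission
  imports Defs "HOL-Library.FuncSet"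
begin

lemma half_count:
  assumes fin: "finite C" and p: "p \<in> C" "bb p"
   and closed: "\<And>x. x\<in>C \<Longrightarrow> add x p \<in> C"
   and inv: "\<And>x. x\<in>C \<Longrightarrow> add (add x p) p = x"
   and addb: "\<And>x. x\<in>C \<Longrightarrow> bb (add x p) = (bb x \<noteq> bb p)"
  shows "2 * card {s\<in>C. \<not> bb s} = card C"
proof -
  have bij: "bij_betw (\<lambda>s. add s p) {s\<in>C. \<not> bb s} {s\<in>C. bb s}"
    apply (rule bij_betwI[where g="\<lambda>s. add s p"]) using assms by auto
  hence e: "card {s\<in>C. \<not> bb s} = card {s\<in>C. bb s}" by (rule bij_betw_same_card)
  have "C = {s\<in>C. \<not> bb s} \<union> {s\<in>C. bb s}" by auto
  hence "card C = card {s\<in>C. \<not> bb s} + card {s\<in>C. bb s}"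
    using card_Un_disjoint[of "{s\<in>C. \<not> bb s}" "{s\<in>C. bb s}"] fin by auto
  thus ?thesis using e by simp
qed

lemma card_filter_sum: "finite C \<Longrightarrow> card {s\<in>C. P s} = (\<Sum>s\<in>C. if P s then 1 else 0)"
  by (simp add: sum.inter_filter[symmetric])

lemma annih_count:
  fixes G C :: "'a set" and add :: "'a \<Rightarrow> 'a \<Rightarrow> 'a" and z :: 'a and b :: "'a \<Rightarrow> 'a \<Rightarrow> bool"
  assumes finG: "finite G" and CG: "C \<subseteq> G" and zC: "z \<in> C"
   and Cadd: "\<And>x y. x\<in>C \<Longrightarrow> y\<in>C \<Longrightarrow> add x y \<in> C"
   and Gadd: "\<And>x y. x\<in>G \<Longrightarrow> y\<in>G \<Longrightarrow> add x y \<in> G"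
   and inv: "\<And>x y. x\<in>G \<Longrightarrow> y\<in>G \<Longrightarrow> add (add x y) y = x"
   and b2: "\<And>x y1 y2. x\<in>G \<Longrightarrow> y1\<in>G \<Longrightarrow> y2\<in>G \<Longrightarrow> b x (add y1 y2) = (b x y1 \<noteq> b x y2)"
   and b1: "\<And>x1 x2 y. x1\<in>G \<Longrightarrow> x2\<in>G \<Longrightarrow> y\<in>G \<Longrightarrow> b (add x1 x2) y = (b x1 y \<noteq> b x2 y)"
   and bz: "\<And>x. x\<in>G \<Longrightarrow> \<not> b x z"
   and nd: "\<And>s. s\<in>G \<Longrightarrow> s \<noteq> z \<Longrightarrow> \<exists>v\<in>G. b v s"
  shows "card C * card {v\<in>G. \<forall>s\<in>C. \<not> b v s} = card G"
proof -
  define A where "A = {v\<in>G. \<forall>s\<in>C. \<not> b v s}"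
  have finC: "finite C" using finG CG finite_subset by blast
  have finA: "finite A" using finG unfolding A_def by simp
  have AG: "A \<subseteq> G" unfolding A_def by auto
  have row: "2 * card {s\<in>C. \<not> b v s} = (if v\<in>A then 2 * card C else card C)" if v: "v \<in> G" for v
  proof (cases "v \<in> A")
    case True
    hence "{s\<in>C. \<not> b v s} = C" unfolding A_def by auto
    thus ?thesis using True by simp
  next
    case False
    then obtain s0 where s0: "s0 \<in> C" "b v s0" unfolding A_def using v by auto
    have "2 * card {s\<in>C. \<not> b v s} = card C"
      apply (rule half_count[where add=add and p=s0])
      using finC s0 Cadd CG inv b2 v by (auto simp: subset_iff)
    thus ?thesis using False by simp
  qed
  have col: "2 * card {v\<in>G. \<not> b v s} = (if s = z then 2 * card G else card G)" if s: "s \<in> C" for s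
  proof (cases "s = z")
    case True
    hence "{v\<in>G. \<not> b v s} = G" using bz by auto
    thus ?thesis using True by simp
  next
    case False
    then obtain v0 where v0: "v0 \<in> G" "b v0 s" using nd s CG by auto
    have "2 * card {v\<in>G. \<not> b v s} = card G"
      apply (rule half_count[where add=add and p=v0])
      using finG v0 Gadd inv b1 s CG by (auto simp: subset_iff)
    thus ?thesis using False by simp
  qed
  have swap: "(\<Sum>v\<in>G. card {s\<in>C. \<not> b v s}) = (\<Sum>s\<in>C. card {v\<in>G. \<not> b v s})"
  proof -
    have "(\<Sum>v\<in>G. card {s\<in>C. \<not> b v s}) = (\<Sum>v\<in>G. \<Sum>s\<in>C. if \<not> b v s then 1 else 0)"
      using finC by (simp add: card_filter_sum)
    also have "\<dots> = (\<Sum>s\<in>C. \<Sum>v\<in>G. if \<not> b v s then 1 else 0)" by (rule sum.swap)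
    also have "\<dots> = (\<Sum>s\<in>C. card {v\<in>G. \<not> b v s})"
      using finG by (simp add: card_filter_sum)
    finally show ?thesis .
  qed
  have L: "2 * (\<Sum>v\<in>G. card {s\<in>C. \<not> b v s}) = 2 * card C * card A + card C * card (G - A)"
  proof -
    have "2 * (\<Sum>v\<in>G. card {s\<in>C. \<not> b v s}) = (\<Sum>v\<in>G. if v\<in>A then 2 * card C else card C)"
      unfolding sum_distrib_left by (rule sum.cong[OF refl]) (rule row)
    also have "\<dots> = (\<Sum>v\<in>A. 2 * card C) + (\<Sum>v\<in>G - A. card C)"
      using finG AG by (simp add: sum.If_cases Int_absorb1 Diff_eq)
    finally show ?thesis by simp
  qed
  have R: "2 * (\<Sum>s\<in>C. card {v\<in>G. \<not> b v s}) = 2 * card G + card G * card (C - {z})"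
  proof -
    have "2 * (\<Sum>s\<in>C. card {v\<in>G. \<not> b v s}) = (\<Sum>s\<in>C. if s = z then 2 * card G else card G)"
      unfolding sum_distrib_left by (rule sum.cong[OF refl]) (rule col)
    also have "\<dots> = 2 * card G + (\<Sum>s\<in>C - {z}. card G)"
      using finC zC by (simp add: sum.remove)
    finally show ?thesis by simp
  qed
  have cG: "card G = card A + card (G - A)" using finG AG
    using card_Diff_subset[OF finA AG] card_mono[OF finG AG] by simp
  have cC: "card C = 1 + card (C - {z})" using finC zC
    using card_Diff_singleton[OF zC] card_gt_0_iff[of C] finC zC by auto
  define a where "a = card A"
  define g where "g = card (G - A)"
  define c where "c = card (C - {z})"
  have "2 * (1 + c) * a + (1 + c) * g = 2 * (a + g) + (a + g) * c"
  proof -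
    have "2 * card C * card A + card C * card (G - A) = 2 * card G + card G * card (C - {z})"
      using L R swap by simp
    thus ?thesis unfolding a_def[symmetric] g_def[symmetric] c_def[symmetric] cG cC[unfolded c_def[symmetric]] .
  qed
  hence "2 * a + 2 * (a * c) + g + g * c = 2 * a + 2 * g + a * c + g * c"
    by (simp only: distrib_left distrib_right mult_1_left mult_1_right mult.commute mult.left_commute)
  hence "a * c = g" by linarith
  hence "(1 + c) * a = a + g" by (simp add: distrib_right mult.commute)
  thus ?thesis unfolding A_def[symmetric] cG cC[unfolded c_def[symmetric]] a_def[symmetric] g_def[symmetric] by (simp only: mult.commute)
qed


definition phiE :: "E \<Rightarrow> bool" where "phiE x = (x = Ek \<or> x = Et)"
definition psiE :: "E \<Rightarrow> bool" where "psiE x = (x = Ez \<or> x = Et)"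

lemma phi_add[simp]: "phiE (x + y) = (phiE x \<noteq> phiE y)"
  by (cases x; cases y) (auto simp: phiE_def plus_E_def)
lemma psi_add[simp]: "psiE (x + y) = (psiE x \<noteq> psiE y)"
  by (cases x; cases y) (auto simp: psiE_def plus_E_def)
lemma phi_mul[simp]: "phiE (x * y) = (phiE x \<and> phiE y)"
  by (cases x; cases y) (auto simp: phiE_def times_E_def)
lemma psi_mul[simp]: "psiE (x * y) = (psiE x \<and> phiE y)"
  by (cases x; cases y) (auto simp: phiE_def psiE_def times_E_def)
lemma phk[simp]: "\<not> phiE 0" by (simp add: phiE_def zero_E_def)
lemma psk[simp]: "\<not> psiE 0" by (simp add: psiE_def zero_E_def)
lemma phiEz[simp]: "\<not> phiE Ez" by (simp add: phiE_def)
lemma psiEk[simp]: "\<not> psiE Ek" by (simp add: psiE_def)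
lemma phiEk[simp]: "phiE Ek" by (simp add: phiE_def)
lemma psiEz[simp]: "psiE Ez" by (simp add: psiE_def)
lemma E_zero_iff: "(x::E) = 0 \<longleftrightarrow> \<not> phiE x \<and> \<not> psiE x"
  by (cases x) (auto simp: phiE_def psiE_def zero_E_def)
lemma E_add_self: "(x::E) + y + y = x"
  by (cases x; cases y) (auto simp: plus_E_def)

fun xs :: "nat \<Rightarrow> (nat \<Rightarrow> bool) \<Rightarrow> bool" where
  "xs 0 f = False"
| "xs (Suc m) f = (xs m f \<noteq> f m)"

lemma phi_sum: "phiE (\<Sum>i<m. g i) = xs m (\<lambda>i. phiE (g i))"
  by (induction m) auto
lemma psi_sum: "psiE (\<Sum>i<m. g i) = xs m (\<lambda>i. psiE (g i))"
  by (induction m) auto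
lemma xs_xor: "xs m (\<lambda>i. f i \<noteq> g i) = (xs m f \<noteq> xs m g)"
  by (induction m) auto
lemma xs_cong: "(\<And>i. i < m \<Longrightarrow> f i = g i) \<Longrightarrow> xs m f = xs m g"
  by (induction m) auto
lemma xs_false[simp]: "xs m (\<lambda>_. False) = False"
  by (induction m) auto
lemma xs_single: "k < m \<Longrightarrow> (\<And>i. i < m \<Longrightarrow> i \<noteq> k \<Longrightarrow> \<not> f i) \<Longrightarrow> xs m f = f k"
proof (induction m)
  case 0 then show ?case by simp
next
  case (Suc m)
  show ?case
  proof (cases "k = m")
    case True
    have "xs m f = False"
      using xs_cong[of m f "\<lambda>_. False"] Suc.prems True by simp
    then show ?thesis using True by simp
  next
    case False
    then have "xs m f = f k" using Suc by simp
    then show ?thesis using Suc.prems False by simp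
  qed
qed

definition Om :: "nat \<Rightarrow> (nat \<Rightarrow> bool) \<Rightarrow> (nat \<Rightarrow> bool) \<Rightarrow> bool" where
  "Om n f g = xs n (\<lambda>i. (f i \<and> g (n+i)) \<noteq> (f (n+i) \<and> g i))"

lemma Om_sym: "Om n f g = Om n g f"
  unfolding Om_def by (rule xs_cong) auto
lemma Om_add1[simp]: "Om n (\<lambda>i. f1 i \<noteq> f2 i) g = (Om n f1 g \<noteq> Om n f2 g)"
  unfolding Om_def xs_xor[symmetric] by (rule xs_cong) auto
lemma Om_add2[simp]: "Om n g (\<lambda>i. f1 i \<noteq> f2 i) = (Om n g f1 \<noteq> Om n g f2)"
  using Om_add1 Om_sym by metis
lemma Om_F1[simp]: "Om n (\<lambda>_. False) g = False"
  unfolding Om_def by simp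
lemma Om_F2[simp]: "Om n g (\<lambda>_. False) = False"
  unfolding Om_def by simp

lemma symp_zero: "symp_E n z w = 0 \<longleftrightarrow>
   \<not> Om n (\<lambda>i. phiE (z i)) (\<lambda>i. phiE (w i)) \<and> \<not> Om n (\<lambda>i. psiE (z i)) (\<lambda>i. phiE (w i))"
  unfolding E_zero_iff symp_E_def Om_def
  by (simp only: phi_add psi_add phi_sum psi_sum phi_mul psi_mul xs_xor)

definition bE :: "nat \<Rightarrow> (nat \<Rightarrow> E) \<Rightarrow> (nat \<Rightarrow> E) \<Rightarrow> bool" where
  "bE n z w = xs n (\<lambda>i. ((phiE (z i) \<and> psiE (w (n+i))) \<noteq> (phiE (z (n+i)) \<and> psiE (w i)))
      \<noteq> ((psiE (z i) \<and> phiE (w (n+i))) \<noteq> (psiE (z (n+i)) \<and> phiE (w i))))"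

lemma bE_Om: "bE n z w = (Om n (\<lambda>i. phiE (z i)) (\<lambda>i. psiE (w i)) \<noteq> Om n (\<lambda>i. psiE (z i)) (\<lambda>i. phiE (w i)))"
  unfolding bE_def Om_def xs_xor[symmetric] ..

lemma card_Evec: "card (Evec n) = 4 ^ (2 * n)"
proof -
  have "bij_betw (\<lambda>x. restrict x {..<2*n}) (Evec n) (PiE {..<2*n} (\<lambda>_. UNIV :: E set))"
    apply (rule bij_betwI[where g="\<lambda>f i. if i < 2*n then f i else 0"])
    by (auto simp: Evec_def PiE_def extensional_def fun_eq_iff)
  hence "card (Evec n) = card (PiE {..<2*n} (\<lambda>_. UNIV :: E set))" by (rule bij_betw_same_card)
  also have "\<dots> = card (UNIV :: E set) ^ (2*n)" by (simp add: card_PiE)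
  also have "card (UNIV :: E set) = 4" by (simp add: E_UNIV)
  finally show ?thesis .
qed

lemma finite_Evec: "finite (Evec n)"
  by (rule card_ge_0_finite) (simp add: card_Evec)


lemma nondeg:
  assumes s: "s \<in> Evec n" and nz: "s \<noteq> (\<lambda>i. 0)"
  shows "\<exists>v\<in>Evec n. bE n v s"
proof -
  obtain j where j: "s j \<noteq> 0" using nz by auto
  have j2: "j < 2*n" by (rule ccontr) (use s j in \<open>auto simp: Evec_def\<close>)
  define x where "x = (if psiE (s j) then Ek else Ez)"
  have key: "(phiE x \<and> psiE (s j)) \<noteq> (psiE x \<and> phiE (s j))"
    using j unfolding x_def by (cases "s j") (auto simp: phiE_def psiE_def zero_E_def)
  show ?thesis
  proof (cases "j < n")
    case True
    define v where "v = (\<lambda>i. if i = n+j then x else 0)"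
    have "v \<in> Evec n" using True unfolding v_def Evec_def by auto
    moreover have "bE n v s"
      unfolding bE_def
      apply (subst xs_single[where k=j])
      using True key by (auto simp: v_def)
    ultimately show ?thesis by blast
  next
    case False
    define v where "v = (\<lambda>i. if i = j - n then x else 0)"
    have "v \<in> Evec n" using False j2 unfolding v_def Evec_def by auto
    moreover have "bE n v s"
      unfolding bE_def
      apply (subst xs_single[where k="j-n"])
      using False j2 key by (auto simp: v_def)
    ultimately show ?thesis by blast
  qed
qed

lemma dual_iff:
  assumes cl: "\<And>w. w \<in> C \<Longrightarrow> smult_E Ez w \<in> C \<and> smult_E Ek w \<in> C"
  shows "(\<forall>w\<in>C. symp_E n z w = 0 \<and> symp_E n w z = 0) \<longleftrightarrow> (\<forall>w\<in>C. \<not> bE n z w)"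
proof
  assume "\<forall>w\<in>C. symp_E n z w = 0 \<and> symp_E n w z = 0"
  then show "\<forall>w\<in>C. \<not> bE n z w"
    unfolding symp_zero bE_Om by (metis Om_sym)
next
  assume h: "\<forall>w\<in>C. \<not> bE n z w"
  show "\<forall>w\<in>C. symp_E n z w = 0 \<and> symp_E n w z = 0"
  proof
    fix w assume w: "w \<in> C"
    have h1: "\<not> bE n z (smult_E Ez w)" and h2: "\<not> bE n z (smult_E Ek w)" and h3: "\<not> bE n z w"
      using h cl w by auto
    have a1: "\<not> Om n (\<lambda>i. phiE (z i)) (\<lambda>i. phiE (w i))"
      using h1 by (simp add: bE_Om smult_E_def)
    have a2: "\<not> Om n (\<lambda>i. psiE (z i)) (\<lambda>i. phiE (w i))"
      using h2 by (simp add: bE_Om smult_E_def)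
    have a3: "\<not> Om n (\<lambda>i. phiE (z i)) (\<lambda>i. psiE (w i))"
      using h3 a2 by (simp add: bE_Om)
    show "symp_E n z w = 0 \<and> symp_E n w z = 0"
      unfolding symp_zero using a1 a2 a3 Om_sym by metis
  qed
qed

theorem mainTheorem13:
  assumes "E_linear_code n C"
  shows "card C * card (symp_dual n C) = card (UNIV :: E set) ^ (2 * n)"
proof -
  have CE: "C \<subseteq> Evec n" and C0: "(\<lambda>i. 0) \<in> C"
    and Cadd: "\<And>x y. x\<in>C \<Longrightarrow> y\<in>C \<Longrightarrow> vadd_E x y \<in> C"
    and Csm: "\<And>e x. x\<in>C \<Longrightarrow> smult_E e x \<in> C"
    using assms unfolding E_linear_code_def by auto
  have dual: "symp_dual n C = {v\<in>Evec n. \<forall>s\<in>C. \<not> bE n v s}"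
    unfolding symp_dual_def using dual_iff[of C n] Csm by auto
  have "card C * card {v\<in>Evec n. \<forall>s\<in>C. \<not> bE n v s} = card (Evec n)"
  proof (rule annih_count[where add=vadd_E and z="\<lambda>i. 0"])
    show "finite (Evec n)" by (rule finite_Evec)
    show "C \<subseteq> Evec n" by (rule CE)
    show "(\<lambda>i. 0) \<in> C" by (rule C0)
    show "\<And>x y. x\<in>C \<Longrightarrow> y\<in>C \<Longrightarrow> vadd_E x y \<in> C" by (rule Cadd)
    show "\<And>x y. x\<in>Evec n \<Longrightarrow> y\<in>Evec n \<Longrightarrow> vadd_E x y \<in> Evec n"
      by (simp add: Evec_def vadd_E_def)
    show "\<And>x y. x\<in>Evec n \<Longrightarrow> y\<in>Evec n \<Longrightarrow> vadd_E (vadd_E x y) y = x"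
      by (simp add: vadd_E_def E_add_self)
    show "\<And>x y1 y2. bE n x (vadd_E y1 y2) = (bE n x y1 \<noteq> bE n x y2)"
      by (simp only: bE_Om vadd_E_def phi_add psi_add Om_add1 Om_add2) blast
    show "\<And>x1 x2 y. bE n (vadd_E x1 x2) y = (bE n x1 y \<noteq> bE n x2 y)"
      by (simp only: bE_Om vadd_E_def phi_add psi_add Om_add1 Om_add2) blast
    show "\<And>x. \<not> bE n x (\<lambda>i. 0)" by (simp add: bE_Om)
    show "\<And>s. s\<in>Evec n \<Longrightarrow> s \<noteq> (\<lambda>i. 0) \<Longrightarrow> \<exists>v\<in>Evec n. bE n v s" by (rule nondeg)
  qed
  also have "\<dots> = card (UNIV :: E set) ^ (2 * n)"
  proof -
    have "card (UNIV :: E set) = 4" by (simp add: E_UNIV)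
    thus ?thesis using card_Evec by simp
  qed
  finally show ?thesis using dual by simp
qed

end
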